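(* Let $s\geq 2$ and let $a,b$ be positive integers with $\operatorname{lcm}(a,b)=s$. In $G_{(s,0)}$, the subgroup $\langle u^a,v^b\rangle$ is core-free of index $6ab$; hence $G_{(s,0)}$ has a faithful transitive permutation representation of degree $6ab$.
   Context: $G_{(s,0)}$ is the group of the toroidal hypermap $(3,3,3)_{(s,0)}$: the Coxeter group $[3,3,3]=\langle\rho_0,\rho_1,\rho_2\mid \rho_i^2=1,\ (\rho_i\rho_j)^3=1\ (i\neq j)\rangle$ factored by $(\rho_0\rho_1\rho_2\rho_1)^s$; it has order $6s^2$. Here $u=\rho_0\rho_1\rho_2\rho_1$ and $v=\rho_1u\rho_1=\rho_1\rho_0\rho_1\rho_2$ generate the abelian normal translation subgroup $T=\langle u,v\rangle\cong C_s\times C_s$. A subgroup is core-free if it contains no nontrivial normal subgroup of the group. *)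

theory Defs
  imports "HOL-Algebra.Algebra"
begin

text \<open>The hypermap group G_(s,0), built literally from its presentation
  [3,3,3] / ((rho0 rho1 rho2 rho1)^s): elements are classes of words in the
  generators rho0, rho1, rho2 modulo the congruence generated by the relators.\<close>

datatype gen = R0 | R1 | R2

inductive wrel :: "nat \<Rightarrow> gen list \<Rightarrow> gen list \<Rightarrow> bool" for s :: nat where
  involution: "wrel s [i, i] []"
| braid: "i \<noteq> j \<Longrightarrow> wrel s (concat (replicate 3 [i, j])) []"
| extra: "wrel s (concat (replicate s [R0, R1, R2, R1])) []"
| refl: "wrel s w w"
| sym: "wrel s w w' \<Longrightarrow> wrel s w' w"
| trans: "wrel s w w' \<Longrightarrow> wrel s w' w'' \<Longrightarrow> wrel s w w''"
| cong: "wrel s w w' \<Longrightarrow> wrel s (p @ w @ q) (p @ w' @ q)"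

definition wclass :: "nat \<Rightarrow> gen list \<Rightarrow> gen list set" where
  "wclass s w = {w'. wrel s w w'}"

definition Gs0 :: "nat \<Rightarrow> gen list set monoid" where
  "Gs0 s = \<lparr> carrier = range (wclass s),
             monoid.mult = (\<lambda>A B. {w. \<exists>a\<in>A. \<exists>b\<in>B. wrel s (a @ b) w}),
             one = wclass s [] \<rparr>"

definition u_el :: "nat \<Rightarrow> gen list set" where
  "u_el s = wclass s [R0, R1, R2, R1]"

definition v_el :: "nat \<Rightarrow> gen list set" where
  "v_el s = wclass s [R1, R0, R1, R2]"

definition core_free :: "('a, 'b) monoid_scheme \<Rightarrow> 'a set \<Rightarrow> bool" where
  "core_free G H \<longleftrightarrow> (\<forall>N. N \<lhd> G \<longrightarrow> N \<subseteq> H \<longrightarrow> N = {\<one>\<^bsub>G\<^esub>})"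

end

theory Submission
  imports Defs
begin

declare wrel.trans[trans]

lemma D: "wrel s (p @ i # i # q) (p @ q)"
  using wrel.cong[OF wrel.involution[of s i], of p q] by simp

lemma braid3: "i \<noteq> j \<Longrightarrow> wrel s [i,j,i] [j,i,j]"
proof -
  assume ij: "i \<noteq> j"
  have r: "concat (replicate 3 [i,j]) = [i,j,i,j,i,j]" by (simp add: numeral_eq_Suc)
  have "wrel s [i,j,i,j,i,j,j,i,j] [j,i,j]"
    using wrel.cong[OF wrel.braid[OF ij, of s], of "[]" "[j,i,j]"] r by simp
  moreover have "wrel s [i,j,i,j,i,j,j,i,j] [i,j,i]"
  proof -
    have "wrel s [i,j,i,j,i,j,j,i,j] [i,j,i,j,i,i,j]" using D[where p="[i,j,i,j,i]" and i=j and q="[i,j]"] by simp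
    also have "wrel s ... [i,j,i,j,j]" using D[where p="[i,j,i,j]" and i=i and q="[j]"] by simp
    also have "wrel s ... [i,j,i]" using D[where p="[i,j,i]" and i=j and q="[]"] by simp
    finally show ?thesis .
  qed
  ultimately show ?thesis by (meson wrel.sym wrel.trans)
qed

lemma B: "i \<noteq> j \<Longrightarrow> wrel s (p @ i # j # i # q) (p @ j # i # j # q)"
  using wrel.cong[OF braid3, of i j s p q] by simp

lemma appcong: "wrel s a a' \<Longrightarrow> wrel s b b' \<Longrightarrow> wrel s (a @ b) (a' @ b')"
proof -
  assume 1: "wrel s a a'" and 2: "wrel s b b'"
  have "wrel s (a @ b) (a' @ b)" using wrel.cong[OF 1, of "[]" b] by simp
  also have "wrel s ... (a' @ b')" using wrel.cong[OF 2, of a' "[]"] by simp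
  finally show ?thesis .
qed

lemma congL: "wrel s b b' \<Longrightarrow> wrel s (a @ b) (a @ b')"
  by (rule appcong[OF wrel.refl])
lemma congR: "wrel s a a' \<Longrightarrow> wrel s (a @ b) (a' @ b)"
  by (rule appcong[OF _ wrel.refl])

lemma cancel1: "wrel s (w @ rev w) []"
proof (induction w)
  case Nil thus ?case by (simp add: wrel.refl)
next
  case (Cons g w)
  have "wrel s ([g] @ (w @ rev w) @ [g]) ([g] @ [] @ [g])" by (rule wrel.cong[OF Cons])
  also have "wrel s ([g] @ [] @ [g]) []" using D[where p="[]" and i=g and q="[]"] by simp
  finally show ?case by simp
qed

lemma cancel2: "wrel s (rev w @ w) []"
  using cancel1[of s "rev w"] by simp

lemma cx_r0: "wrel s [R0] [R0,R1,R2,R1,R1,R2,R1]"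
proof -
  have "wrel s [R0] [R0,R1,R1]" using wrel.sym[OF D[where p="[R0]" and i=R1 and q="[]"]] by simp
  also have "wrel s ... [R0,R1,R2,R2,R1]" using wrel.sym[OF D[where p="[R0,R1]" and i=R2 and q="[R1]"]] by simp
  also have "wrel s ... [R0,R1,R2,R1,R1,R2,R1]" using wrel.sym[OF D[where p="[R0,R1,R2]" and i=R1 and q="[R2,R1]"]] by simp
  finally show ?thesis .
qed

lemma cx_comm: "wrel s [R0,R1,R2,R1,R1,R0,R1,R2] [R1,R0,R1,R2,R0,R1,R2,R1]"
proof -
  have "wrel s [R0,R1,R2,R1,R1,R0,R1,R2] [R0,R1,R2,R0,R1,R2]" using D[where p="[R0,R1,R2]" and i=R1 and q="[R0,R1,R2]"] by simp
  also have "wrel s ... [R0,R1,R2,R0,R1,R2,R1,R1]" using wrel.sym[OF D[where p="[R0,R1,R2,R0,R1,R2]" and i=R1 and q="[]"]] by simp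
  also have "wrel s ... [R0,R1,R2,R0,R2,R1,R2,R1]" using wrel.sym[OF B[where p="[R0,R1,R2,R0]" and i=R2 and j=R1 and q="[R1]"]] by simp
  also have "wrel s ... [R0,R1,R0,R2,R0,R1,R2,R1]" using wrel.sym[OF B[where p="[R0,R1]" and i=R0 and j=R2 and q="[R1,R2,R1]"]] by simp
  also have "wrel s ... [R1,R0,R1,R2,R0,R1,R2,R1]" using wrel.sym[OF B[where p="[]" and i=R1 and j=R0 and q="[R2,R0,R1,R2,R1]"]] by simp
  finally show ?thesis .
qed

lemma cx_v: "wrel s [R1,R0,R1,R2] [R1,R0,R1,R2,R1,R1]"
  using wrel.sym[OF D[where p="[R1,R0,R1,R2]" and i=R1 and q="[]"]] by simp

lemma cx_s1_0: "wrel s [R1] [R1]"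
  by (rule wrel.refl)

lemma cx_s2_0: "wrel s [R2] [R2]"
  by (rule wrel.refl)

lemma cx_t_0: "wrel s [R0,R1,R2,R1] [R0,R1,R2,R1]"
  by (rule wrel.refl)

lemma cx_s1_1: "wrel s [R1,R1] []"
  using D[where p="[]" and i=R1 and q="[]"] by simp

lemma cx_s2_1: "wrel s [R1,R2] [R1,R2]"
  by (rule wrel.refl)

lemma cx_t_1: "wrel s [R1,R0,R1,R2,R1] [R1,R0,R1,R2,R1]"
  by (rule wrel.refl)

lemma cx_s1_2: "wrel s [R2,R1] [R2,R1]"
  by (rule wrel.refl)

lemma cx_s2_2: "wrel s [R2,R2] []"
  using D[where p="[]" and i=R2 and q="[]"] by simp

lemma cx_t_2: "wrel s [R2,R0,R1,R2,R1] [R0,R1,R2,R1,R2,R1,R0,R1,R2]"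
proof -
  have "wrel s [R2,R0,R1,R2,R1] [R2,R0,R2,R1,R2]" using wrel.sym[OF B[where p="[R2,R0]" and i=R2 and j=R1 and q="[]"]] by simp
  also have "wrel s ... [R0,R2,R0,R1,R2]" using wrel.sym[OF B[where p="[]" and i=R0 and j=R2 and q="[R1,R2]"]] by simp
  also have "wrel s ... [R0,R2,R1,R1,R0,R1,R2]" using wrel.sym[OF D[where p="[R0,R2]" and i=R1 and q="[R0,R1,R2]"]] by simp
  also have "wrel s ... [R0,R2,R1,R2,R2,R1,R0,R1,R2]" using wrel.sym[OF D[where p="[R0,R2,R1]" and i=R2 and q="[R1,R0,R1,R2]"]] by simp
  also have "wrel s ... [R0,R1,R2,R1,R2,R1,R0,R1,R2]" using wrel.sym[OF B[where p="[R0]" and i=R1 and j=R2 and q="[R2,R1,R0,R1,R2]"]] by simp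
  finally show ?thesis .
qed

lemma cx_s1_3: "wrel s [R1,R2,R1] [R1,R2,R1]"
  by (rule wrel.refl)

lemma cx_s2_3: "wrel s [R1,R2,R2] [R1]"
  using D[where p="[R1]" and i=R2 and q="[]"] by simp

lemma cx_t_3: "wrel s [R1,R2,R0,R1,R2,R1] [R1,R2,R1,R0,R1,R0,R1,R2,R1,R2]"
proof -
  have "wrel s [R1,R2,R0,R1,R2,R1] [R1,R2,R0,R2,R1,R2]" using wrel.sym[OF B[where p="[R1,R2,R0]" and i=R2 and j=R1 and q="[]"]] by simp
  also have "wrel s ... [R1,R2,R0,R1,R1,R2,R1,R2]" using wrel.sym[OF D[where p="[R1,R2,R0]" and i=R1 and q="[R2,R1,R2]"]] by simp
  also have "wrel s ... [R1,R2,R0,R1,R0,R0,R1,R2,R1,R2]" using wrel.sym[OF D[where p="[R1,R2,R0,R1]" and i=R0 and q="[R1,R2,R1,R2]"]] by simp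
  also have "wrel s ... [R1,R2,R1,R0,R1,R0,R1,R2,R1,R2]" using wrel.sym[OF B[where p="[R1,R2]" and i=R1 and j=R0 and q="[R0,R1,R2,R1,R2]"]] by simp
  finally show ?thesis .
qed

lemma cx_s1_4: "wrel s [R2,R1,R1] [R2]"
  using D[where p="[R2]" and i=R1 and q="[]"] by simp

lemma cx_s2_4: "wrel s [R2,R1,R2] [R1,R2,R1]"
  using wrel.sym[OF B[where p="[]" and i=R1 and j=R2 and q="[]"]] by simp

lemma cx_t_4: "wrel s [R2,R1,R0,R1,R2,R1] [R2,R1,R0,R1,R2,R1]"
  by (rule wrel.refl)

lemma cx_s1_5: "wrel s [R1,R2,R1,R1] [R1,R2]"
  using D[where p="[R1,R2]" and i=R1 and q="[]"] by simp

lemma cx_s2_5: "wrel s [R1,R2,R1,R2] [R2,R1]"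
proof -
  have "wrel s [R1,R2,R1,R2] [R2,R1,R2,R2]" using B[where p="[]" and i=R1 and j=R2 and q="[R2]"] by simp
  also have "wrel s ... [R2,R1]" using D[where p="[R2,R1]" and i=R2 and q="[]"] by simp
  finally show ?thesis .
qed

lemma cx_t_5: "wrel s [R1,R2,R1,R0,R1,R2,R1] [R1,R2,R1,R0,R1,R2,R1]"
  by (rule wrel.refl)



lemma cx_r_0: "wrel s [R1,R2,R1] [R1,R2,R1]"
  by (rule wrel.refl)

lemma cx_r_1: "wrel s [R1,R1,R2,R1] [R2,R1]"
  using D[where p="[]" and i=R1 and q="[R2,R1]"] by simp

lemma cx_r_2: "wrel s [R2,R1,R2,R1] [R1,R2]"
proof -
  have "wrel s [R2,R1,R2,R1] [R1,R2,R1,R1]" using B[where p="[]" and i=R2 and j=R1 and q="[R1]"] by simp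
  also have "wrel s ... [R1,R2]" using D[where p="[R1,R2]" and i=R1 and q="[]"] by simp
  finally show ?thesis .
qed

lemma cx_r_3: "wrel s [R1,R2,R1,R2,R1] [R2]"
proof -
  have "wrel s [R1,R2,R1,R2,R1] [R2,R1,R2,R2,R1]" using B[where p="[]" and i=R1 and j=R2 and q="[R2,R1]"] by simp
  also have "wrel s ... [R2,R1,R1]" using D[where p="[R2,R1]" and i=R2 and q="[R1]"] by simp
  also have "wrel s ... [R2]" using D[where p="[R2]" and i=R1 and q="[]"] by simp
  finally show ?thesis .
qed

lemma cx_r_4: "wrel s [R2,R1,R1,R2,R1] [R1]"
proof -
  have "wrel s [R2,R1,R1,R2,R1] [R2,R2,R1]" using D[where p="[R2]" and i=R1 and q="[R2,R1]"] by simp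
  also have "wrel s ... [R1]" using D[where p="[]" and i=R2 and q="[R1]"] by simp
  finally show ?thesis .
qed

lemma cx_r_5: "wrel s [R1,R2,R1,R1,R2,R1] []"
proof -
  have "wrel s [R1,R2,R1,R1,R2,R1] [R1,R2,R2,R1]" using D[where p="[R1,R2]" and i=R1 and q="[R2,R1]"] by simp
  also have "wrel s ... [R1,R1]" using D[where p="[R1]" and i=R2 and q="[R1]"] by simp
  also have "wrel s ... []" using D[where p="[]" and i=R1 and q="[]"] by simp
  finally show ?thesis .
qed

section \<open>Concrete model\<close>

definition dx :: "nat \<Rightarrow> int" where
  "dx k = (if k = 0 \<or> k = 2 then 1 else if k = 3 \<or> k = 5 then -1 else 0)"
definition dy :: "nat \<Rightarrow> int" where
  "dy k = (if k = 1 \<or> k = 3 then 1 else if k = 2 \<or> k = 4 then -1 else 0)"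
definition dvx :: "nat \<Rightarrow> int" where
  "dvx k = (if k = 1 \<or> k = 4 then 1 else if k = 3 \<or> k = 5 then -1 else 0)"
definition dvy :: "nat \<Rightarrow> int" where
  "dvy k = (if k = 0 \<or> k = 5 then 1 else if k = 2 \<or> k = 4 then -1 else 0)"
definition m1t :: "nat \<Rightarrow> nat" where
  "m1t k = (if k=0 then 1 else if k=1 then 0 else if k=2 then 4 else if k=3 then 5 else if k=4 then 2 else 3)"
definition m2t :: "nat \<Rightarrow> nat" where
  "m2t k = (if k=0 then 2 else if k=1 then 3 else if k=2 then 0 else if k=3 then 1 else if k=4 then 5 else 4)"

fun stp :: "nat \<Rightarrow> nat \<Rightarrow> int \<times> int \<times> nat \<Rightarrow> gen \<Rightarrow> int \<times> int \<times> nat" where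
  "stp m n (x,y,k) R0 = ((x + dx k) mod int m, (y + dy k) mod int n, 5 - k)"
| "stp m n (x,y,k) R1 = (x, y, m1t k)"
| "stp m n (x,y,k) R2 = (x, y, m2t k)"

definition Rng :: "nat \<Rightarrow> nat \<Rightarrow> (int \<times> int \<times> nat) set" where
  "Rng m n = {0..<int m} \<times> {0..<int n} \<times> {..<6}"

lemma k6: "(k::nat) < 6 \<Longrightarrow> k = 0 \<or> k = 1 \<or> k = 2 \<or> k = 3 \<or> k = 4 \<or> k = 5"
  by auto

lemmas tabs = dx_def dy_def dvx_def dvy_def m1t_def m2t_def

lemma stp_range: "st \<in> Rng m n \<Longrightarrow> 0 < m \<Longrightarrow> 0 < n \<Longrightarrow> stp m n st g \<in> Rng m n"
  by (cases st; cases g) (auto simp: Rng_def m1t_def m2t_def)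

lemma foldl_range: "st \<in> Rng m n \<Longrightarrow> 0 < m \<Longrightarrow> 0 < n \<Longrightarrow> foldl (stp m n) st w \<in> Rng m n"
  by (induction w arbitrary: st) (auto simp: stp_range)

lemma modsimp: "(m::int) dvd c \<Longrightarrow> (x + c) mod m = x mod m"
proof -
  assume "m dvd c"
  then have "c mod m = 0" by simp
  moreover have "(x + c) mod m = (x + c mod m) mod m" by (simp add: mod_add_right_eq)
  ultimately show ?thesis by simp
qed

fun stp0 :: "int \<times> int \<times> nat \<Rightarrow> gen \<Rightarrow> int \<times> int \<times> nat" where
  "stp0 (x,y,k) R0 = (x + dx k, y + dy k, 5 - k)"
| "stp0 (x,y,k) R1 = (x, y, m1t k)"
| "stp0 (x,y,k) R2 = (x, y, m2t k)"

fun red :: "nat \<Rightarrow> nat \<Rightarrow> int \<times> int \<times> nat \<Rightarrow> int \<times> int \<times> nat" where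
  "red m n (x,y,k) = (x mod int m, y mod int n, k)"

lemma stp_red: "stp m n (red m n st) g = red m n (stp0 st g)"
  by (cases st; cases g) (simp_all add: mod_add_left_eq)

lemma foldl_red: "foldl (stp m n) (red m n st) w = red m n (foldl stp0 st w)"
proof (induction w arbitrary: st)
  case Nil thus ?case by simp
next
  case (Cons g w)
  show ?case using Cons.IH[of "stp0 st g"] by (simp add: stp_red)
qed

lemma red_id: "st \<in> Rng m n \<Longrightarrow> red m n st = st"
  by (cases st) (auto simp: Rng_def)

lemma foldl_red2: "st \<in> Rng m n \<Longrightarrow> foldl (stp m n) st w = red m n (foldl stp0 st w)"
proof -
  assume a: "st \<in> Rng m n"
  have "foldl (stp m n) st w = foldl (stp m n) (red m n st) w" by (simp only: red_id[OF a])
  also have "\<dots> = red m n (foldl stp0 st w)" by (rule foldl_red)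
  finally show ?thesis .
qed

lemma inv_rel0:
  assumes "k < 6"
  shows "foldl stp0 (x,y,k) [i,i] = (x,y,k)"
  using k6[OF assms] by (cases i; elim disjE) (simp_all add: tabs)

lemma braid_rel0:
  assumes "k < 6" "i \<noteq> j"
  shows "foldl stp0 (x,y,k) [i,j,i,j,i,j] = (x,y,k)"
  using k6[OF assms(1)] assms(2) by (cases i; cases j; elim disjE) (simp_all add: tabs)

lemma inv_rel:
  assumes "(x,y,k) \<in> Rng m n"
  shows "foldl (stp m n) (x,y,k) [i,i] = (x,y,k)"
proof -
  have "k < 6" using assms by (simp add: Rng_def)
  then show ?thesis using foldl_red2[OF assms, of "[i,i]"] inv_rel0[of k x y i] red_id[OF assms] by simp
qed

lemma braid_rel:
  assumes "(x,y,k) \<in> Rng m n" "i \<noteq> j"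
  shows "foldl (stp m n) (x,y,k) [i,j,i,j,i,j] = (x,y,k)"
proof -
  have "k < 6" using assms by (simp add: Rng_def)
  then show ?thesis using foldl_red2[OF assms(1), of "[i,j,i,j,i,j]"] braid_rel0[of k i j x y] assms red_id[OF assms(1)] by simp
qed

definition uw :: "gen list" where "uw = [R0,R1,R2,R1]"
definition vw :: "gen list" where "vw = [R1,R0,R1,R2]"
definition upow :: "nat \<Rightarrow> gen list" where "upow N = concat (replicate N uw)"
definition vpow :: "nat \<Rightarrow> gen list" where "vpow N = concat (replicate N vw)"

lemma foldl_uw: "k < 6 \<Longrightarrow> foldl stp0 (x,y,k) uw = (x + dx k, y + dy k, k)"
  by (drule k6, elim disjE) (simp_all add: uw_def tabs)

lemma foldl_vw: "k < 6 \<Longrightarrow> foldl stp0 (x,y,k) vw = (x + dvx k, y + dvy k, k)"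
  by (drule k6, elim disjE) (simp_all add: vw_def tabs)

lemma foldl_upow:
  "k < 6 \<Longrightarrow> foldl stp0 (x,y,k) (upow N) = (x + int N * dx k, y + int N * dy k, k)"
proof (induction N arbitrary: x y)
  case 0 thus ?case by (simp add: upow_def)
next
  case (Suc N)
  have "foldl stp0 (x,y,k) (upow (Suc N)) = foldl stp0 (x + dx k, y + dy k, k) (upow N)"
    by (simp add: upow_def foldl_uw[OF Suc.prems])
  also have "\<dots> = (x + int (Suc N) * dx k, y + int (Suc N) * dy k, k)"
    using Suc.IH[OF Suc.prems] by (simp add: algebra_simps)
  finally show ?case .
qed

lemma foldl_vpow:
  "k < 6 \<Longrightarrow> foldl stp0 (x,y,k) (vpow N) = (x + int N * dvx k, y + int N * dvy k, k)"
proof (induction N arbitrary: x y)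
  case 0 thus ?case by (simp add: vpow_def)
next
  case (Suc N)
  have "foldl stp0 (x,y,k) (vpow (Suc N)) = foldl stp0 (x + dvx k, y + dvy k, k) (vpow N)"
    by (simp add: vpow_def foldl_vw[OF Suc.prems])
  also have "\<dots> = (x + int (Suc N) * dvx k, y + int (Suc N) * dvy k, k)"
    using Suc.IH[OF Suc.prems] by (simp add: algebra_simps)
  finally show ?case .
qed

lemma rel_inv:
  assumes "wrel s w w'" "0 < m" "0 < n" "m dvd s" "n dvd s" "st \<in> Rng m n"
  shows "foldl (stp m n) st w = foldl (stp m n) st w'"
  using assms
proof (induction arbitrary: st rule: wrel.induct)
  case (involution i)
  then show ?case using inv_rel[of "fst st" "fst (snd st)" "snd (snd st)" m n i] by simp
next
  case (braid i j)
  have r: "concat (replicate 3 [i,j]) = [i,j,i,j,i,j]" by (simp add: numeral_eq_Suc)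
  show ?case using braid braid_rel[of "fst st" "fst (snd st)" "snd (snd st)" m n i j] r by simp
next
  case extra
  obtain x y k where st: "st = (x,y,k)" by (cases st)
  have k: "k < 6" using extra.prems st by (simp add: Rng_def)
  have "concat (replicate s [R0, R1, R2, R1]) = upow s" by (simp add: upow_def uw_def)
  moreover have "foldl (stp m n) (x,y,k) (upow s) = (x,y,k)"
  proof -
    have d1: "int m dvd int s * dx k" using extra.prems by simp
    have d2: "int n dvd int s * dy k" using extra.prems by simp
    have "foldl (stp m n) (x,y,k) (upow s) = red m n (x + int s * dx k, y + int s * dy k, k)"
      using foldl_red2[of "(x,y,k)" m n "upow s"] extra.prems st foldl_upow[OF k] by simp
    also have "\<dots> = red m n (x,y,k)" by (simp add: modsimp[OF d1] modsimp[OF d2])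
    also have "\<dots> = (x,y,k)" using red_id[of "(x,y,k)" m n] extra.prems st by simp
    finally show ?thesis .
  qed
  ultimately show ?case using st by simp
next
  case (refl w) thus ?case by simp
next
  case (sym w w') thus ?case by simp
next
  case (trans w w' w'') thus ?case by simp
next
  case (cong w w' p q)
  have r: "foldl (stp m n) st p \<in> Rng m n" using cong.prems foldl_range by blast
  show ?case using cong.IH[OF cong.prems(1-4) r] by simp
qed


section \<open>Normal forms\<close>

lemma upow_snoc: "upow N @ uw = upow (Suc N)"
  by (induction N) (simp_all add: upow_def)
lemma vpow_snoc: "vpow N @ vw = vpow (Suc N)"
  by (induction N) (simp_all add: vpow_def)

lemma upow_s: "wrel s (upow s) []"
  using wrel.extra[of s] by (simp add: upow_def uw_def)

lemma comm1: "wrel s (uw @ vw) (vw @ uw)"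
  using cx_comm by (simp add: uw_def vw_def)

lemma vu: "wrel s (vpow q @ uw) (uw @ vpow q)"
proof (induction q)
  case 0 thus ?case by (simp add: vpow_def wrel.refl)
next
  case (Suc q)
  have "wrel s (vpow (Suc q) @ uw) (vw @ (vpow q @ uw))" by (simp add: vpow_def wrel.refl)
  also have "wrel s ... (vw @ (uw @ vpow q))" by (rule congL[OF Suc.IH])
  also have "wrel s ... ((uw @ vw) @ vpow q)" using congR[OF wrel.sym[OF comm1], of s "vpow q"] by simp
  also have "(uw @ vw) @ vpow q = uw @ vpow (Suc q)" by (simp add: vpow_def)
  finally show ?case .
qed

lemma vub: "wrel s (vpow q @ rev uw) (rev uw @ vpow q)"
proof -
  have "wrel s (vpow q @ rev uw) ((rev uw @ uw) @ vpow q @ rev uw)"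
    using wrel.sym[OF congR[OF cancel2[of s uw], of "vpow q @ rev uw"]] by simp
  also have "wrel s ... (rev uw @ (uw @ vpow q) @ rev uw)" by (simp add: wrel.refl)
  also have "wrel s ... (rev uw @ (vpow q @ uw) @ rev uw)"
    by (rule congL[OF congR[OF wrel.sym[OF vu]]])
  also have "wrel s ... ((rev uw @ vpow q) @ (uw @ rev uw))" by (simp add: wrel.refl)
  also have "wrel s ... ((rev uw @ vpow q) @ [])" by (rule congL[OF cancel1])
  finally show ?thesis by simp
qed

lemma vpow_conj: "wrel s (vpow N) ([R1] @ upow N @ [R1])"
proof (induction N)
  case 0 thus ?case using wrel.sym[OF D[where p="[]" and i=R1 and q="[]"]] by (simp add: vpow_def upow_def)
next
  case (Suc N)
  have v: "wrel s vw ([R1] @ uw @ [R1])" using cx_v by (simp add: vw_def uw_def)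
  have "wrel s (vpow (Suc N)) (vw @ vpow N)" by (simp add: vpow_def wrel.refl)
  also have "wrel s ... (([R1] @ uw @ [R1]) @ ([R1] @ upow N @ [R1]))" by (rule appcong[OF v Suc.IH])
  also have "wrel s ... (([R1] @ uw) @ (upow N @ [R1]))"
    using D[where p="[R1] @ uw" and i=R1 and q="upow N @ [R1]"] by simp
  finally show ?case by (simp add: upow_def)
qed

lemma vpow_s: "wrel s (vpow s) []"
proof -
  have "wrel s (vpow s) ([R1] @ upow s @ [R1])" by (rule vpow_conj)
  also have "wrel s ... ([R1] @ [] @ [R1])" by (rule congL[OF congR[OF upow_s]])
  also have "wrel s ... []" using D[where p="[]" and i=R1 and q="[]"] by simp
  finally show ?thesis .
qed

lemma ubar: "0 < s \<Longrightarrow> wrel s (rev uw) (upow (s - 1))"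
proof -
  assume s: "0 < s"
  have "wrel s (rev uw) (upow s @ rev uw)" using wrel.sym[OF congR[OF upow_s, of s "rev uw"]] by simp
  also have "upow s @ rev uw = upow (s - 1) @ (uw @ rev uw)" using upow_snoc[of "s - 1"] s by simp
  also have "wrel s ... (upow (s - 1) @ [])" by (rule congL[OF cancel1])
  finally show ?thesis by simp
qed

lemma vbar: "0 < s \<Longrightarrow> wrel s (rev vw) (vpow (s - 1))"
proof -
  assume s: "0 < s"
  have "wrel s (rev vw) (vpow s @ rev vw)" using wrel.sym[OF congR[OF vpow_s, of s "rev vw"]] by simp
  also have "vpow s @ rev vw = vpow (s - 1) @ (vw @ rev vw)" using vpow_snoc[of "s - 1"] s by simp
  also have "wrel s ... (vpow (s - 1) @ [])" by (rule congL[OF cancel1])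
  finally show ?thesis by simp
qed

lemma twu:
  assumes "0 \<le> x" "x < int s"
  shows "wrel s (upow (nat x) @ vpow q @ uw) (upow (nat ((x + 1) mod int s)) @ vpow q)"
proof -
  have "wrel s (upow (nat x) @ vpow q @ uw) (upow (nat x) @ uw @ vpow q)" by (rule congL[OF vu])
  also have "upow (nat x) @ uw @ vpow q = upow (Suc (nat x)) @ vpow q"
    using upow_snoc[of "nat x"] by (metis append.assoc)
  finally have 1: "wrel s (upow (nat x) @ vpow q @ uw) (upow (Suc (nat x)) @ vpow q)" .
  show ?thesis
  proof (cases "x + 1 < int s")
    case True
    then have "nat ((x + 1) mod int s) = Suc (nat x)" using assms by simp
    then show ?thesis using 1 by simp
  next
    case False
    then have "x + 1 = int s" using assms by simp
    then have e: "Suc (nat x) = s" "nat ((x + 1) mod int s) = 0" using assms by auto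
    have 2: "wrel s (upow s @ vpow q) (vpow q)" using congR[OF upow_s, of s "vpow q"] by simp
    show ?thesis using wrel.trans[OF 1[unfolded e(1)] 2] e(2) by (simp add: upow_def)
  qed
qed

lemma twub:
  assumes "0 \<le> x" "x < int s"
  shows "wrel s (upow (nat x) @ vpow q @ rev uw) (upow (nat ((x - 1) mod int s)) @ vpow q)"
proof -
  have s: "0 < s" using assms by simp
  have 1: "wrel s (upow (nat x) @ vpow q @ rev uw) (upow (nat x) @ rev uw @ vpow q)" by (rule congL[OF vub])
  show ?thesis
  proof (cases "x = 0")
    case True
    have h: "wrel s (upow (nat x) @ rev uw @ vpow q) (upow (s - 1) @ vpow q)"
      using congR[OF ubar[OF s], of "vpow q"] True by (simp add: upow_def)
    moreover have e: "nat ((x - 1) mod int s) = s - 1" using True s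
      by (simp add: zmod_minus1 of_nat_diff)
    show ?thesis using wrel.trans[OF 1 h] e by simp
  next
    case False
    then have e: "nat x = Suc (nat (x - 1))" "nat ((x - 1) mod int s) = nat (x - 1)" using assms by auto
    have "upow (nat x) @ rev uw @ vpow q = upow (nat (x - 1)) @ (uw @ rev uw) @ vpow q"
      using upow_snoc[of "nat (x - 1)"] e by simp
    also have "wrel s ... (upow (nat (x - 1)) @ [] @ vpow q)" by (rule congL[OF congR[OF cancel1]])
    finally have 2: "wrel s (upow (nat x) @ rev uw @ vpow q) (upow (nat (x - 1)) @ [] @ vpow q)" .
    show ?thesis using wrel.trans[OF 1 2] e by simp
  qed
qed

lemma twv:
  assumes "0 \<le> y" "y < int s"
  shows "wrel s (upow p @ vpow (nat y) @ vw) (upow p @ vpow (nat ((y + 1) mod int s)))"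
proof (cases "y + 1 < int s")
  case True
  then have "nat ((y + 1) mod int s) = Suc (nat y)" using assms by simp
  then show ?thesis using vpow_snoc[of "nat y"] by (simp add: wrel.refl)
next
  case False
  then have "y + 1 = int s" using assms by simp
  then have e: "Suc (nat y) = s" "nat ((y + 1) mod int s) = 0" using assms by auto
  have "wrel s (upow p @ vpow s) (upow p @ [])" by (rule congL[OF vpow_s])
  then show ?thesis using e vpow_snoc[of "nat y"] by (simp add: vpow_def)
qed

lemma twvb:
  assumes "0 \<le> y" "y < int s"
  shows "wrel s (upow p @ vpow (nat y) @ rev vw) (upow p @ vpow (nat ((y - 1) mod int s)))"
proof -
  have s: "0 < s" using assms by simp
  show ?thesis
  proof (cases "y = 0")
    case True
    have "wrel s (upow p @ vpow (nat y) @ rev vw) (upow p @ vpow (s - 1))"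
      using congL[OF vbar[OF s], of "upow p"] True by (simp add: vpow_def)
    moreover have "nat ((y - 1) mod int s) = s - 1" using True s
      by (simp add: zmod_minus1 of_nat_diff)
    ultimately show ?thesis by simp
  next
    case False
    then have e: "nat y = Suc (nat (y - 1))" "nat ((y - 1) mod int s) = nat (y - 1)" using assms by auto
    have "upow p @ vpow (nat y) @ rev vw = (upow p @ vpow (nat (y - 1))) @ (vw @ rev vw)"
      using vpow_snoc[of "nat (y - 1)"] e by simp
    also have "wrel s ... ((upow p @ vpow (nat (y - 1))) @ [])" by (rule congL[OF cancel1])
    finally show ?thesis using e by simp
  qed
qed


definition sig :: "nat \<Rightarrow> gen list" where
  "sig k = (if k = 0 then [] else if k = 1 then [R1] else if k = 2 then [R2] else if k = 3 then [R1,R2]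
            else if k = 4 then [R2,R1] else [R1,R2,R1])"
definition Ww :: "nat \<Rightarrow> gen list" where
  "Ww k = (if k = 0 then uw else if k = 1 then vw else if k = 2 then uw @ rev vw else if k = 3 then rev uw @ vw
            else if k = 4 then rev vw else rev uw)"

lemma sig_u: "k < 6 \<Longrightarrow> wrel s (sig k @ uw) (Ww k @ sig k)"
  by (drule k6, elim disjE) (simp_all add: sig_def Ww_def uw_def vw_def cx_t_0 cx_t_1 cx_t_2 cx_t_3 cx_t_4 cx_t_5)
lemma sig_1: "k < 6 \<Longrightarrow> wrel s (sig k @ [R1]) (sig (m1t k))"
  by (drule k6, elim disjE) (simp_all add: sig_def m1t_def cx_s1_0 cx_s1_1 cx_s1_2 cx_s1_3 cx_s1_4 cx_s1_5)
lemma sig_2: "k < 6 \<Longrightarrow> wrel s (sig k @ [R2]) (sig (m2t k))"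
  by (drule k6, elim disjE) (simp_all add: sig_def m2t_def cx_s2_0 cx_s2_1 cx_s2_2 cx_s2_3 cx_s2_4 cx_s2_5)
lemma sig_r: "k < 6 \<Longrightarrow> wrel s (sig k @ [R1,R2,R1]) (sig (5 - k))"
  by (drule k6, elim disjE) (simp_all add: sig_def cx_r_0 cx_r_1 cx_r_2 cx_r_3 cx_r_4 cx_r_5)

lemma sig_R0: assumes k: "k < 6" shows "wrel s (sig k @ [R0]) (Ww k @ sig (5 - k))"
proof -
  have "wrel s (sig k @ [R0]) (sig k @ uw @ [R1,R2,R1])"
    using congL[OF cx_r0, where a="sig k"] by (simp add: uw_def)
  also have "wrel s ... (Ww k @ sig k @ [R1,R2,R1])"
    using congR[OF sig_u[OF k], where b="[R1,R2,R1]"] by simp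
  also have "wrel s ... (Ww k @ sig (5 - k))"
    using congL[OF sig_r[OF k], where a="Ww k"] by simp
  finally show ?thesis .
qed

lemma tw_W:
  assumes r: "(x,y,k) \<in> Rng s s"
  shows "wrel s (upow (nat x) @ vpow (nat y) @ Ww k) (upow (nat ((x + dx k) mod int s)) @ vpow (nat ((y + dy k) mod int s)))"
proof -
  have x: "0 \<le> x" "x < int s" and y: "0 \<le> y" "y < int s" and k: "k < 6" using r by (auto simp: Rng_def)
  have xm: "x mod int s = x" and ym: "y mod int s = y" using x y by auto
  have x1: "0 \<le> (x + 1) mod int s" "(x + 1) mod int s < int s" and
       x2: "0 \<le> (x - 1) mod int s" "(x - 1) mod int s < int s" using x by auto
  consider "k = 0" | "k = 1" | "k = 2" | "k = 3" | "k = 4" | "k = 5" using k by linarith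
  then show ?thesis
  proof cases
    case 1 then show ?thesis using twu[OF x, where q="nat y"] ym by (simp add: Ww_def tabs)
  next
    case 2 then show ?thesis using twv[OF y, where p="nat x"] xm by (simp add: Ww_def tabs)
  next
    case 3
    have a: "wrel s (upow (nat x) @ vpow (nat y) @ uw @ rev vw) (upow (nat ((x + 1) mod int s)) @ vpow (nat y) @ rev vw)"
      using congR[OF twu[OF x, where q="nat y"], where b="rev vw"] by simp
    have b: "wrel s (upow (nat ((x + 1) mod int s)) @ vpow (nat y) @ rev vw) (upow (nat ((x + 1) mod int s)) @ vpow (nat ((y - 1) mod int s)))"
      by (rule twvb[OF y])
    show ?thesis using wrel.trans[OF a b] 3 by (simp add: Ww_def tabs)
  next
    case 4
    have a: "wrel s (upow (nat x) @ vpow (nat y) @ rev uw @ vw) (upow (nat ((x - 1) mod int s)) @ vpow (nat y) @ vw)"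
      using congR[OF twub[OF x, where q="nat y"], where b="vw"] by simp
    have b: "wrel s (upow (nat ((x - 1) mod int s)) @ vpow (nat y) @ vw) (upow (nat ((x - 1) mod int s)) @ vpow (nat ((y + 1) mod int s)))"
      by (rule twv[OF y])
    show ?thesis using wrel.trans[OF a b] 4 by (simp add: Ww_def tabs)
  next
    case 5 then show ?thesis using twvb[OF y, where p="nat x"] xm by (simp add: Ww_def tabs)
  next
    case 6 then show ?thesis using twub[OF x, where q="nat y"] ym by (simp add: Ww_def tabs)
  qed
qed

definition nf :: "int \<times> int \<times> nat \<Rightarrow> gen list" where
  "nf st = (case st of (x,y,k) \<Rightarrow> upow (nat x) @ vpow (nat y) @ sig k)"

lemma nf_step:
  assumes r: "st \<in> Rng s s"
  shows "wrel s (nf st @ [g]) (nf (stp s s st g))"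
proof -
  obtain x y k where st: "st = (x,y,k)" by (cases st)
  have k: "k < 6" using r st by (simp add: Rng_def)
  show ?thesis
  proof (cases g)
    case R0
    have "wrel s (nf st @ [g]) ((upow (nat x) @ vpow (nat y)) @ (sig k @ [R0]))" using st R0 by (simp add: nf_def wrel.refl)
    also have "wrel s ... ((upow (nat x) @ vpow (nat y)) @ (Ww k @ sig (5 - k)))" by (rule congL[OF sig_R0[OF k]])
    also have "wrel s ... ((upow (nat x) @ vpow (nat y) @ Ww k) @ sig (5 - k))" by (simp add: wrel.refl)
    also have "wrel s ... ((upow (nat ((x + dx k) mod int s)) @ vpow (nat ((y + dy k) mod int s))) @ sig (5 - k))"
      by (rule congR[OF tw_W[OF r[unfolded st]]])
    also have "... = nf (stp s s st g)" using st R0 by (simp add: nf_def)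
    finally show ?thesis .
  next
    case R1
    have "wrel s ((upow (nat x) @ vpow (nat y)) @ (sig k @ [R1])) ((upow (nat x) @ vpow (nat y)) @ sig (m1t k))"
      by (rule congL[OF sig_1[OF k]])
    then show ?thesis using st R1 by (simp add: nf_def)
  next
    case R2
    have "wrel s ((upow (nat x) @ vpow (nat y)) @ (sig k @ [R2])) ((upow (nat x) @ vpow (nat y)) @ sig (m2t k))"
      by (rule congL[OF sig_2[OF k]])
    then show ?thesis using st R2 by (simp add: nf_def)
  qed
qed

abbreviation ev :: "nat \<Rightarrow> gen list \<Rightarrow> int \<times> int \<times> nat" where
  "ev s w \<equiv> foldl (stp s s) (0,0,0) w"

lemma zero_Rng: "0 < m \<Longrightarrow> 0 < n \<Longrightarrow> (0,0,0) \<in> Rng m n"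
  by (simp add: Rng_def)

lemma ev_range: "0 < s \<Longrightarrow> ev s w \<in> Rng s s"
  by (rule foldl_range[OF zero_Rng])

lemma nf_ev: "0 < s \<Longrightarrow> wrel s w (nf (ev s w))"
proof (induction w rule: rev_induct)
  case Nil
  have "nf (0,0,0) = []" by (simp add: nf_def upow_def vpow_def sig_def)
  then show ?case by (simp add: wrel.refl)
next
  case (snoc g w)
  have "wrel s (w @ [g]) (nf (ev s w) @ [g])" by (rule congR[OF snoc.IH[OF snoc.prems]])
  also have "wrel s ... (nf (stp s s (ev s w) g))" by (rule nf_step[OF ev_range[OF snoc.prems]])
  finally show ?case by simp
qed

lemma sig0: "k < 6 \<Longrightarrow> foldl stp0 (x,y,0) (sig k) = (x,y,k)"
  by (drule k6, elim disjE) (simp_all add: sig_def tabs)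

lemma noR0_xy: "set w \<subseteq> {R1,R2} \<Longrightarrow> \<exists>k'. foldl stp0 (x,y,k0) w = (x,y,k')"
proof (induction w arbitrary: k0)
  case Nil thus ?case by simp
next
  case (Cons g w)
  then have "g = R1 \<or> g = R2" "set w \<subseteq> {R1,R2}" by auto
  then show ?case using Cons.IH by auto
qed

lemma sig_xy: "\<exists>k'. foldl stp0 (x,y,k0) (sig k) = (x,y,k')"
  by (rule noR0_xy) (auto simp: sig_def)

lemma ev_nf: assumes r: "st \<in> Rng s s" shows "ev s (nf st) = st"
proof -
  obtain x y k where st: "st = (x,y,k)" by (cases st)
  have x: "0 \<le> x" "x < int s" and y: "0 \<le> y" "y < int s" and k: "k < 6" using r st by (auto simp: Rng_def)
  have s: "0 < s" using x by simp
  have "foldl stp0 (0,0,0) (nf st) = foldl stp0 (foldl stp0 (foldl stp0 (0,0,0) (upow (nat x))) (vpow (nat y))) (sig k)"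
    using st by (simp add: nf_def)
  also have "\<dots> = (x,y,k)" using foldl_upow[of 0 "0::int" "0::int" "nat x"] foldl_vpow[of 0 x "0::int" "nat y"] sig0[OF k] x y
    by (simp add: tabs)
  finally have "foldl stp0 (0,0,0) (nf st) = (x,y,k)" .
  then show ?thesis using foldl_red2[OF zero_Rng[OF s s], of "nf st"] red_id[OF r] st by simp
qed

lemma wrel_iff: "0 < s \<Longrightarrow> wrel s w w' \<longleftrightarrow> ev s w = ev s w'"
proof
  assume "0 < s" "wrel s w w'"
  then show "ev s w = ev s w'" using rel_inv[of s w w' s s "(0,0,0)"] zero_Rng by simp
next
  assume s: "0 < s" and e: "ev s w = ev s w'"
  have 1: "wrel s w (nf (ev s w'))" using nf_ev[OF s, of w] e by simp
  show "wrel s w w'" using wrel.trans[OF 1 wrel.sym[OF nf_ev[OF s, of w']]] .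
qed


section \<open>The group\<close>

lemma wclass_eq: "wclass s w = wclass s w' \<longleftrightarrow> wrel s w w'"
proof
  assume e: "wclass s w = wclass s w'"
  have "w' \<in> wclass s w'" by (simp add: wclass_def wrel.refl)
  then have "w' \<in> wclass s w" using e by simp
  then show "wrel s w w'" by (simp add: wclass_def)
next
  assume h: "wrel s w w'"
  show "wclass s w = wclass s w'"
    unfolding wclass_def using h by (blast intro: wrel.trans wrel.sym)
qed

lemma mult_wclass: "wclass s w \<otimes>\<^bsub>Gs0 s\<^esub> wclass s w' = wclass s (w @ w')"
proof -
  have "{x. \<exists>a\<in>wclass s w. \<exists>b\<in>wclass s w'. wrel s (a @ b) x} = wclass s (w @ w')"
  proof (rule equalityI; rule subsetI)
    fix x assume "x \<in> {x. \<exists>a\<in>wclass s w. \<exists>b\<in>wclass s w'. wrel s (a @ b) x}"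
    then obtain a b where 1: "wrel s w a" "wrel s w' b" "wrel s (a @ b) x" by (auto simp: wclass_def)
    have "wrel s (w @ w') x" using wrel.trans[OF appcong[OF 1(1,2)] 1(3)] .
    then show "x \<in> wclass s (w @ w')" by (simp add: wclass_def)
  next
    fix x assume x: "x \<in> wclass s (w @ w')"
    have "w \<in> wclass s w" "w' \<in> wclass s w'" by (simp_all add: wclass_def wrel.refl)
    then show "x \<in> {x. \<exists>a\<in>wclass s w. \<exists>b\<in>wclass s w'. wrel s (a @ b) x}"
      using x by (auto simp: wclass_def)
  qed
  then show ?thesis by (simp add: Gs0_def)
qed

lemma carrier_Gs0: "carrier (Gs0 s) = range (wclass s)" by (simp add: Gs0_def)
lemma one_Gs0: "\<one>\<^bsub>Gs0 s\<^esub> = wclass s []" by (simp add: Gs0_def)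

lemma group_Gs0: "group (Gs0 s)"
proof (rule groupI)
  fix x y assume "x \<in> carrier (Gs0 s)" "y \<in> carrier (Gs0 s)"
  then show "x \<otimes>\<^bsub>Gs0 s\<^esub> y \<in> carrier (Gs0 s)" by (auto simp: carrier_Gs0 mult_wclass)
next
  show "\<one>\<^bsub>Gs0 s\<^esub> \<in> carrier (Gs0 s)" by (simp add: carrier_Gs0 one_Gs0)
next
  fix x y z assume "x \<in> carrier (Gs0 s)" "y \<in> carrier (Gs0 s)" "z \<in> carrier (Gs0 s)"
  then show "x \<otimes>\<^bsub>Gs0 s\<^esub> y \<otimes>\<^bsub>Gs0 s\<^esub> z = x \<otimes>\<^bsub>Gs0 s\<^esub> (y \<otimes>\<^bsub>Gs0 s\<^esub> z)"
    by (auto simp: carrier_Gs0 mult_wclass)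
next
  fix x assume "x \<in> carrier (Gs0 s)"
  then show "\<one>\<^bsub>Gs0 s\<^esub> \<otimes>\<^bsub>Gs0 s\<^esub> x = x" by (auto simp: carrier_Gs0 mult_wclass one_Gs0)
next
  fix x assume "x \<in> carrier (Gs0 s)"
  then obtain w where x: "x = wclass s w" by (auto simp: carrier_Gs0)
  have "wclass s (rev w) \<otimes>\<^bsub>Gs0 s\<^esub> x = \<one>\<^bsub>Gs0 s\<^esub>"
    using x cancel2[of s w] by (simp add: mult_wclass one_Gs0 wclass_eq)
  then show "\<exists>y\<in>carrier (Gs0 s). y \<otimes>\<^bsub>Gs0 s\<^esub> x = \<one>\<^bsub>Gs0 s\<^esub>" by (auto simp: carrier_Gs0)
qed

lemma inv_wclass: "inv\<^bsub>Gs0 s\<^esub> (wclass s w) = wclass s (rev w)"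
proof (rule group.inv_equality[OF group_Gs0])
  show "wclass s (rev w) \<otimes>\<^bsub>Gs0 s\<^esub> wclass s w = \<one>\<^bsub>Gs0 s\<^esub>"
    using cancel2[of s w] by (simp add: mult_wclass one_Gs0 wclass_eq)
qed (auto simp: carrier_Gs0)

lemma concat_rep_snoc: "concat (replicate n w) @ w = concat (replicate (Suc n) w)"
  by (induction n) auto

lemma pow_wclass: "wclass s w [^]\<^bsub>Gs0 s\<^esub> (n::nat) = wclass s (concat (replicate n w))"
proof (induction n)
  case 0 thus ?case by (simp add: one_Gs0)
next
  case (Suc n) thus ?case by (simp add: mult_wclass concat_rep_snoc del: replicate_Suc)
qed

lemma wclass_eq_ev: "0 < s \<Longrightarrow> wclass s w = wclass s w' \<longleftrightarrow> ev s w = ev s w'"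
  by (simp add: wclass_eq wrel_iff)

lemma wrel_rev: "wrel s w w' \<Longrightarrow> wrel s (rev w) (rev w')"
proof (induction rule: wrel.induct)
  case (involution i) thus ?case by (simp add: wrel.involution)
next
  case (braid i j)
  have "rev (concat (replicate 3 [i,j])) = concat (replicate 3 [j,i])" by (simp add: numeral_eq_Suc)
  then show ?case using wrel.braid[of j i s] braid by simp
next
  case extra
  have e: "concat (replicate s [R0, R1, R2, R1]) = upow s" by (simp add: upow_def uw_def)
  have "wrel s (rev (upow s)) (rev (upow s) @ upow s)"
    using congL[OF wrel.sym[OF upow_s[of s]], where a="rev (upow s)"] by simp
  also have "wrel s ... []" by (rule cancel2)
  finally show ?case using e by simp
next
  case (refl w) thus ?case by (rule wrel.refl)
next
  case (sym w w') show ?case by (rule wrel.sym[OF sym.IH])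
next
  case (trans w w' w'') show ?case by (rule wrel.trans[OF trans.IH])
next
  case (cong w w' p q) thus ?case using wrel.cong[of s "rev w" "rev w'" "rev q" "rev p"] by simp
qed


fun sh :: "int \<Rightarrow> int \<Rightarrow> int \<times> int \<times> nat \<Rightarrow> int \<times> int \<times> nat" where
  "sh x0 y0 (x,y,k) = (x0 + x, y0 + y, k)"

lemma stp0_sh: "stp0 (sh x0 y0 st) g = sh x0 y0 (stp0 st g)"
  by (cases st; cases g) (simp_all add: algebra_simps)

lemma foldl_sh: "foldl stp0 (sh x0 y0 st) w = sh x0 y0 (foldl stp0 st w)"
proof (induction w arbitrary: st)
  case Nil thus ?case by simp
next
  case (Cons g w) thus ?case by (simp add: stp0_sh)
qed

lemma f00: "0 \<le> x \<Longrightarrow> 0 \<le> y \<Longrightarrow> foldl stp0 (0,0,0) (upow (nat x) @ vpow (nat y)) = (x,y,0)"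
  using foldl_upow[of 0 "0::int" "0::int" "nat x"] foldl_vpow[of 0 x "0::int" "nat y"]
  by (simp add: tabs)

lemma f01: "0 \<le> x \<Longrightarrow> 0 \<le> y \<Longrightarrow> foldl stp0 (0,0,1) (upow (nat x) @ vpow (nat y)) = (y,x,1)"
  using foldl_upow[of 1 "0::int" "0::int" "nat x"] foldl_vpow[of 1 "0::int" x "nat y"]
  by (simp add: tabs)

lemma f0nf: "0 \<le> x \<Longrightarrow> 0 \<le> y \<Longrightarrow> k < 6 \<Longrightarrow> foldl stp0 (0,0,0) (nf (x,y,k)) = (x,y,k)"
  using f00[of x y] sig0[of k x y] by (simp add: nf_def)

lemma card_Rng: "card (Rng m n) = m * n * 6"
  by (simp add: Rng_def card_cartesian_product)

lemma Rng_fin: "finite (Rng m n)"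
  by (simp add: Rng_def)

locale hsetup =
  fixes s a b :: nat
  assumes s2: "s \<ge> 2" and apos: "a > 0" and bpos: "b > 0" and lcmab: "lcm a b = s"
begin

lemma spos: "0 < s" using s2 by simp
lemma adv: "a dvd s" using lcmab by (metis dvd_lcm1)
lemma bdv: "b dvd s" using lcmab by (metis dvd_lcm2)
lemma iadv: "int a dvd int s" using adv by simp
lemma ibdv: "int b dvd int s" using bdv by simp

lemma ev_red: "ev s w = red s s (foldl stp0 (0,0,0) w)"
  using foldl_red2[OF zero_Rng[OF spos spos]] by simp

lemma ev_app:
  assumes e: "ev s w = (p,q,0)" and f: "foldl stp0 (0,0,0) w' = (x1,y1,k)"
  shows "ev s (w @ w') = ((p + x1) mod int s, (q + y1) mod int s, k)"
proof -
  have r: "(p,q,0) \<in> Rng s s" using ev_range[OF spos, of w] e by simp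
  have "ev s (w @ w') = foldl (stp s s) (p,q,0) w'" using e by simp
  also have "\<dots> = red s s (foldl stp0 (sh p q (0,0,0)) w')" using foldl_red2[OF r] by simp
  also have "\<dots> = ((p + x1) mod int s, (q + y1) mod int s, k)" using foldl_sh[of p q "(0,0,0)" w'] f by simp
  finally show ?thesis .
qed

lemma carrier_nf: "carrier (Gs0 s) = (\<lambda>st. wclass s (nf st)) ` Rng s s"
proof
  show "carrier (Gs0 s) \<subseteq> (\<lambda>st. wclass s (nf st)) ` Rng s s"
  proof
    fix Xc assume "Xc \<in> carrier (Gs0 s)"
    then obtain w where Xc: "Xc = wclass s w" by (auto simp: carrier_Gs0)
    then have "Xc = wclass s (nf (ev s w))" using nf_ev[OF spos] by (simp add: wclass_eq)
    then show "Xc \<in> (\<lambda>st. wclass s (nf st)) ` Rng s s" using ev_range[OF spos] by blast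
  qed
qed (auto simp: carrier_Gs0)

lemma inj_nf: "inj_on (\<lambda>st. wclass s (nf st)) (Rng s s)"
proof (rule inj_onI)
  fix st st' assume r: "st \<in> Rng s s" "st' \<in> Rng s s" and e: "wclass s (nf st) = wclass s (nf st')"
  then have "ev s (nf st) = ev s (nf st')" using wclass_eq_ev[OF spos] by simp
  then show "st = st'" using ev_nf[OF r(1)] ev_nf[OF r(2)] by simp
qed

lemma order_G: "order (Gs0 s) = s * s * 6"
  unfolding order_def carrier_nf using card_image[OF inj_nf] card_Rng by simp

definition inK :: "int \<times> int \<times> nat \<Rightarrow> bool" where
  "inK st \<longleftrightarrow> snd (snd st) = 0 \<and> int a dvd fst st \<and> int b dvd fst (snd st)"

definition K :: "gen list set set" where
  "K = {Xc. \<exists>w. Xc = wclass s w \<and> inK (ev s w)}"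

lemma K_mem: "wclass s w \<in> K \<longleftrightarrow> inK (ev s w)"
proof
  assume "wclass s w \<in> K"
  then obtain w' where "wclass s w = wclass s w'" "inK (ev s w')" by (auto simp: K_def)
  then show "inK (ev s w)" using wclass_eq_ev[OF spos] by simp
qed (auto simp: K_def)

lemma K_sub: "subgroup K (Gs0 s)"
proof (rule group.subgroupI[OF group_Gs0])
  show "K \<subseteq> carrier (Gs0 s)" by (auto simp: K_def carrier_Gs0)
next
  have "wclass s [] \<in> K" by (simp add: K_mem inK_def)
  then show "K \<noteq> {}" by blast
next
  fix Xc assume "Xc \<in> K"
  then obtain w where Xc: "Xc = wclass s w" and i: "inK (ev s w)" by (auto simp: K_def)
  obtain p q where e: "ev s w = (p,q,0)" using i by (cases "ev s w") (auto simp: inK_def)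
  obtain xx yy k where f: "foldl stp0 (0,0,0) (rev w) = (xx,yy,k)" by (cases "foldl stp0 (0,0,0) (rev w)") auto
  have "ev s (w @ rev w) = ev s []" using cancel1[of s w] wrel_iff[OF spos] by blast
  then have z: "(p + xx) mod int s = 0" "(q + yy) mod int s = 0" "k = 0" using ev_app[OF e f] by auto
  have "int a dvd p + xx" using z(1) iadv by (metis dvd_trans mod_0_imp_dvd)
  then have ax: "int a dvd xx" using i e by (simp add: inK_def dvd_add_right_iff)
  have "int b dvd q + yy" using z(2) ibdv by (metis dvd_trans mod_0_imp_dvd)
  then have byy: "int b dvd yy" using i e by (simp add: inK_def dvd_add_right_iff)
  have "ev s (rev w) = (xx mod int s, yy mod int s, k)" using ev_red f by simp
  then have "inK (ev s (rev w))" using ax byy z(3) iadv ibdv by (simp add: inK_def dvd_mod_iff)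
  then show "inv\<^bsub>Gs0 s\<^esub> Xc \<in> K" using Xc by (simp add: inv_wclass K_mem)
next
  fix Xc Yc assume "Xc \<in> K" "Yc \<in> K"
  then obtain w w' where Xc: "Xc = wclass s w" and i: "inK (ev s w)"
    and Yc: "Yc = wclass s w'" and i': "inK (ev s w')" by (auto simp: K_def)
  obtain p q where e: "ev s w = (p,q,0)" using i by (cases "ev s w") (auto simp: inK_def)
  obtain xx yy k where f: "foldl stp0 (0,0,0) w' = (xx,yy,k)" by (cases "foldl stp0 (0,0,0) w'") auto
  have "ev s w' = (xx mod int s, yy mod int s, k)" using ev_red f by simp
  then have k: "k = 0" and ax: "int a dvd xx" and byy: "int b dvd yy"
    using i' iadv ibdv by (auto simp: inK_def dvd_mod_iff)
  have "inK (ev s (w @ w'))" using ev_app[OF e f] k ax byy i e iadv ibdv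
    by (simp add: inK_def dvd_mod_iff)
  then show "Xc \<otimes>\<^bsub>Gs0 s\<^esub> Yc \<in> K" using Xc Yc by (simp add: mult_wclass K_mem)
qed

end


lemma nat_int_mult: "nat (int x * int y) = x * y" by (metis nat_int of_nat_mult)
lemma int_mult_less: "x * y < z \<Longrightarrow> int x * int y < int z" by (metis of_nat_less_iff of_nat_mult)

lemma upow_add: "upow (m + n) = upow m @ upow n" by (simp add: upow_def replicate_add)
lemma vpow_add: "vpow (m + n) = vpow m @ vpow n" by (simp add: vpow_def replicate_add)

context hsetup
begin

abbreviation HH where "HH \<equiv> generate (Gs0 s) {u_el s [^]\<^bsub>Gs0 s\<^esub> a, v_el s [^]\<^bsub>Gs0 s\<^esub> b}"

lemma u_pow: "u_el s [^]\<^bsub>Gs0 s\<^esub> n = wclass s (upow n)"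
  by (simp add: u_el_def pow_wclass upow_def uw_def)
lemma v_pow: "v_el s [^]\<^bsub>Gs0 s\<^esub> n = wclass s (vpow n)"
  by (simp add: v_el_def pow_wclass vpow_def vw_def)

lemma ev_upow: "ev s (upow n) = (int n mod int s, 0, 0)"
  using ev_red[of "upow n"] foldl_upow[of 0 "0::int" "0::int" n] by (simp add: tabs)
lemma ev_vpow: "ev s (vpow n) = (0, int n mod int s, 0)"
  using ev_red[of "vpow n"] foldl_vpow[of 0 "0::int" "0::int" n] by (simp add: tabs)

lemma H_sub_K: "HH \<subseteq> K"
proof (rule group.generate_subgroup_incl[OF group_Gs0 _ K_sub])
  have "wclass s (upow a) \<in> K" "wclass s (vpow b) \<in> K"
    using iadv ibdv by (simp_all add: K_mem inK_def ev_upow ev_vpow dvd_mod_iff)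
  then show "{u_el s [^]\<^bsub>Gs0 s\<^esub> a, v_el s [^]\<^bsub>Gs0 s\<^esub> b} \<subseteq> K" by (simp add: u_pow v_pow)
qed

lemma gen_u: "wclass s (upow (a * i)) \<in> HH"
proof (induction i)
  case 0
  have "\<one>\<^bsub>Gs0 s\<^esub> \<in> HH" by (rule generate.one)
  then show ?case by (simp add: one_Gs0 upow_def)
next
  case (Suc i)
  have inc: "u_el s [^]\<^bsub>Gs0 s\<^esub> a \<in> HH" by (rule generate.incl) simp
  have e: "wclass s (upow a) = u_el s [^]\<^bsub>Gs0 s\<^esub> a" by (simp add: u_pow)
  have "wclass s (upow a) \<in> HH" using inc by (simp only: e)
  then have "wclass s (upow a) \<otimes>\<^bsub>Gs0 s\<^esub> wclass s (upow (a * i)) \<in> HH" using Suc by (rule generate.eng)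
  then show ?case by (simp add: mult_wclass upow_add)
qed

lemma gen_v: "wclass s (vpow (b * i)) \<in> HH"
proof (induction i)
  case 0
  have "\<one>\<^bsub>Gs0 s\<^esub> \<in> HH" by (rule generate.one)
  then show ?case by (simp add: one_Gs0 vpow_def)
next
  case (Suc i)
  have inc: "v_el s [^]\<^bsub>Gs0 s\<^esub> b \<in> HH" by (rule generate.incl) simp
  have e: "wclass s (vpow b) = v_el s [^]\<^bsub>Gs0 s\<^esub> b" by (simp add: v_pow)
  have "wclass s (vpow b) \<in> HH" using inc by (simp only: e)
  then have "wclass s (vpow b) \<otimes>\<^bsub>Gs0 s\<^esub> wclass s (vpow (b * i)) \<in> HH" using Suc by (rule generate.eng)
  then show ?case by (simp add: mult_wclass vpow_add)
qed

lemma K_elem: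
  assumes "Xc \<in> K"
  obtains i j where "i < s div a" "j < s div b" "Xc = wclass s (nf (int (a * i), int (b * j), 0))"
proof -
  obtain w where Xc: "Xc = wclass s w" and k: "inK (ev s w)" using assms by (auto simp: K_def)
  obtain p q where e: "ev s w = (p,q,0)" using k by (cases "ev s w") (auto simp: inK_def)
  have r: "0 \<le> p" "p < int s" "0 \<le> q" "q < int s" using ev_range[OF spos, of w] e by (auto simp: Rng_def)
  obtain i0 where i0: "p = int a * i0" using k e by (auto simp: inK_def elim: dvdE)
  obtain j0 where j0: "q = int b * j0" using k e by (auto simp: inK_def elim: dvdE)
  have "0 \<le> i0" using r(1) i0 apos by (simp add: zero_le_mult_iff)
  then have pi: "p = int (a * nat i0)" using i0 by simp
  have "0 \<le> j0" using r(3) j0 bpos by (simp add: zero_le_mult_iff)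
  then have qj: "q = int (b * nat j0)" using j0 by simp
  have sa: "a * (s div a) = s" using adv by simp
  have sb: "b * (s div b) = s" using bdv by simp
  have "a * nat i0 < a * (s div a)" using r(2) pi sa by linarith
  then have ilt: "nat i0 < s div a" by simp
  have "b * nat j0 < b * (s div b)" using r(4) qj sb by linarith
  then have jlt: "nat j0 < s div b" by simp
  have "Xc = wclass s (nf (ev s w))" using Xc nf_ev[OF spos, of w] by (simp add: wclass_eq)
  then have "Xc = wclass s (nf (int (a * nat i0), int (b * nat j0), 0))" using e pi qj by simp
  then show ?thesis using that ilt jlt by blast
qed

lemma K_sub_H: "K \<subseteq> HH"
proof
  fix Xc assume "Xc \<in> K"
  then obtain i j where "Xc = wclass s (nf (int (a * i), int (b * j), 0))" by (rule K_elem)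
  then have "Xc = wclass s (upow (a * i)) \<otimes>\<^bsub>Gs0 s\<^esub> wclass s (vpow (b * j))"
    by (simp add: nf_def sig_def mult_wclass nat_int_mult)
  then show "Xc \<in> HH" using generate.eng[OF gen_u gen_v] by simp
qed

lemma H_eq: "HH = K" using H_sub_K K_sub_H by blast

lemma card_K: "card K = (s div a) * (s div b)"
proof -
  define f where "f = (\<lambda>(i,j). wclass s (nf (int (a * i), int (b * j), 0)))"
  have sa: "a * (s div a) = s" using adv by simp
  have sb: "b * (s div b) = s" using bdv by simp
  have rng: "(int (a * i), int (b * j), 0) \<in> Rng s s" if "i < s div a" "j < s div b" for i j
  proof -
    have "a * i < a * (s div a)" using that apos by simp
    moreover have "b * j < b * (s div b)" using that bpos by simp
    ultimately show ?thesis using sa sb by (simp add: Rng_def int_mult_less)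
  qed
  have "K = f ` ({..<s div a} \<times> {..<s div b})"
  proof
    show "K \<subseteq> f ` ({..<s div a} \<times> {..<s div b})"
    proof
      fix Xc assume "Xc \<in> K"
      then obtain i j where "i < s div a" "j < s div b" "Xc = wclass s (nf (int (a * i), int (b * j), 0))"
        by (rule K_elem)
      then show "Xc \<in> f ` ({..<s div a} \<times> {..<s div b})" unfolding f_def by force
    qed
  next
    show "f ` ({..<s div a} \<times> {..<s div b}) \<subseteq> K"
    proof
      fix Xc assume "Xc \<in> f ` ({..<s div a} \<times> {..<s div b})"
      then obtain i j where ij: "i < s div a" "j < s div b" and Xc: "Xc = wclass s (nf (int (a * i), int (b * j), 0))"
        unfolding f_def by auto
      have "ev s (nf (int (a * i), int (b * j), 0)) = (int (a * i), int (b * j), 0)" by (rule ev_nf[OF rng[OF ij]])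
      then show "Xc \<in> K" using Xc by (simp add: K_mem inK_def)
    qed
  qed
  moreover have "inj_on f ({..<s div a} \<times> {..<s div b})"
  proof (rule inj_onI)
    fix x y assume x: "x \<in> {..<s div a} \<times> {..<s div b}" and y: "y \<in> {..<s div a} \<times> {..<s div b}" and e: "f x = f y"
    obtain i j where xi: "x = (i,j)" by (cases x)
    obtain i' j' where yi: "y = (i',j')" by (cases y)
    have "ev s (nf (int (a * i), int (b * j), 0)) = ev s (nf (int (a * i'), int (b * j'), 0))"
      using e xi yi wclass_eq_ev[OF spos] by (simp add: f_def)
    then have "(int (a * i), int (b * j), 0::nat) = (int (a * i'), int (b * j'), 0)"
      using ev_nf[OF rng] x y xi yi by auto
    then show "x = y" using xi yi apos bpos by simp
  qed
  ultimately show ?thesis by (simp add: card_image card_cartesian_product)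
qed

lemma card_rc: "card (rcosets\<^bsub>Gs0 s\<^esub> HH) = 6 * a * b"
proof -
  have "card (rcosets\<^bsub>Gs0 s\<^esub> K) * card K = order (Gs0 s)" by (rule group.lagrange[OF group_Gs0 K_sub])
  then have 1: "card (rcosets\<^bsub>Gs0 s\<^esub> K) * ((s div a) * (s div b)) = (6 * a * b) * ((s div a) * (s div b))"
    using order_G card_K adv bdv
    by (metis (no_types, lifting) dvd_mult_div_cancel mult.commute mult.left_commute)
  have "a \<le> s" "b \<le> s" using adv bdv spos by (simp_all add: dvd_imp_le)
  then have "0 < (s div a) * (s div b)" using apos bpos by (simp add: div_greater_zero_iff)
  then show ?thesis using 1 H_eq by simp
qed

lemma core_free_H: "core_free (Gs0 s) HH"
  unfolding core_free_def H_eq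
proof (intro allI impI)
  fix N assume nN: "N \<lhd> Gs0 s" and NK: "N \<subseteq> K"
  have sgN: "subgroup N (Gs0 s)" using nN by (rule normal_imp_subgroup)
  show "N = {\<one>\<^bsub>Gs0 s\<^esub>}"
  proof
    show "{\<one>\<^bsub>Gs0 s\<^esub>} \<subseteq> N" using subgroup.one_closed[OF sgN] by simp
  next
    show "N \<subseteq> {\<one>\<^bsub>Gs0 s\<^esub>}"
    proof
      fix Xc assume XN: "Xc \<in> N"
      then have "Xc \<in> carrier (Gs0 s)" using subgroup.subset[OF sgN] by blast
      then obtain w where Xc: "Xc = wclass s w" by (auto simp: carrier_Gs0)
      have k: "inK (ev s w)" using XN NK Xc K_mem by auto
      obtain p q where e: "ev s w = (p,q,0)" using k by (cases "ev s w") (auto simp: inK_def)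
      have r: "0 \<le> p" "p < int s" "0 \<le> q" "q < int s" using ev_range[OF spos, of w] e by (auto simp: Rng_def)
      have r1: "wclass s [R1] \<in> carrier (Gs0 s)" by (simp add: carrier_Gs0)
      have "wclass s [R1] \<otimes>\<^bsub>Gs0 s\<^esub> Xc \<otimes>\<^bsub>Gs0 s\<^esub> inv\<^bsub>Gs0 s\<^esub> (wclass s [R1]) \<in> N"
        by (rule normal.inv_op_closed2[OF nN r1 XN])
      then have "wclass s ([R1] @ w @ [R1]) \<in> K" using Xc NK by (auto simp: mult_wclass inv_wclass)
      then have k2: "inK (ev s ([R1] @ w @ [R1]))" by (simp add: K_mem)
      have "wrel s ([R1] @ w @ [R1]) ([R1] @ nf (p,q,0) @ [R1])"
        using wrel.cong[OF nf_ev[OF spos, of w], of "[R1]" "[R1]"] e by simp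
      then have "ev s ([R1] @ w @ [R1]) = ev s ([R1] @ nf (p,q,0) @ [R1])" using wrel_iff[OF spos] by blast
      also have "\<dots> = red s s (foldl stp0 (0,0,0) ([R1] @ nf (p,q,0) @ [R1]))" by (rule ev_red)
      also have "\<dots> = red s s (stp0 (foldl stp0 (0,0,1) (upow (nat p) @ vpow (nat q))) R1)"
        by (simp add: nf_def sig_def m1t_def)
      also have "\<dots> = (q, p, 0)" using f01[OF r(1) r(3)] r by (simp add: m1t_def)
      finally have "ev s ([R1] @ w @ [R1]) = (q, p, 0)" .
      then have d: "int a dvd q" "int b dvd p" "int a dvd p" "int b dvd q" using k2 k e by (auto simp: inK_def)
      have l: "lcm (int a) (int b) = int s" using lcmab by simp
      have sp: "int s dvd p" using lcm_least[OF d(3) d(2)] l by simp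
      have sq: "int s dvd q" using lcm_least[OF d(1) d(4)] l by simp
      have "p = 0"
      proof (rule ccontr)
        assume "p \<noteq> 0"
        then have "int s \<le> p" using zdvd_imp_le[OF sp] r(1) by simp
        then show False using r(2) by simp
      qed
      moreover have "q = 0"
      proof (rule ccontr)
        assume "q \<noteq> 0"
        then have "int s \<le> q" using zdvd_imp_le[OF sq] r(3) by simp
        then show False using r(4) by simp
      qed
      ultimately have "ev s w = ev s []" using e by simp
      then show "Xc \<in> {\<one>\<^bsub>Gs0 s\<^esub>}" using Xc wclass_eq_ev[OF spos] by (simp add: one_Gs0)
    qed
  qed
qed

end


context hsetup
begin

definition enc :: "int \<times> int \<times> nat \<Rightarrow> nat" where
  "enc st = (case st of (x,y,k) \<Rightarrow> nat x + a * (nat y + b * k))"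
definition dec :: "nat \<Rightarrow> int \<times> int \<times> nat" where
  "dec n = (int (n mod a), int (n div a mod b), n div a div b)"
definition EE :: "nat set" where "EE = enc ` Rng a b"

lemma dec_enc: assumes "st \<in> Rng a b" shows "dec (enc st) = st"
proof -
  obtain x y k where st: "st = (x,y,k)" by (cases st)
  have r: "0 \<le> x" "x < int a" "0 \<le> y" "y < int b" using assms st by (auto simp: Rng_def)
  have x: "nat x < a" and y: "nat y < b" using r by auto
  have 1: "(nat x + a * (nat y + b * k)) mod a = nat x" using x by simp
  have 2: "(nat x + a * (nat y + b * k)) div a = nat y + b * k" using x apos by simp
  have 3: "(nat y + b * k) mod b = nat y" using y by simp
  have 4: "(nat y + b * k) div b = k" using y bpos by simp
  show ?thesis using st r 1 2 3 4 by (simp add: enc_def dec_def)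
qed

lemma enc_E: "st \<in> Rng a b \<Longrightarrow> enc st \<in> EE" by (simp add: EE_def)
lemma dec_range: "n \<in> EE \<Longrightarrow> dec n \<in> Rng a b" by (auto simp: EE_def dec_enc)
lemma enc_dec: "n \<in> EE \<Longrightarrow> enc (dec n) = n" by (auto simp: EE_def dec_enc)

lemma card_E: "card EE = 6 * a * b"
proof -
  have "inj_on enc (Rng a b)" by (rule inj_on_inverseI[of _ dec]) (rule dec_enc)
  then have "card (enc ` Rng a b) = card (Rng a b)" by (rule card_image)
  then show ?thesis unfolding EE_def card_Rng by (simp add: ac_simps)
qed

lemma fin_E: "finite EE" by (simp add: EE_def Rng_fin)

lemma fab_rel: "wrel s w w' \<Longrightarrow> z \<in> Rng a b \<Longrightarrow> foldl (stp a b) z w = foldl (stp a b) z w'"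
  by (rule rel_inv[OF _ apos bpos adv bdv])

lemma fab_range: "z \<in> Rng a b \<Longrightarrow> foldl (stp a b) z w \<in> Rng a b"
  by (rule foldl_range) (simp_all add: apos bpos)

lemma fab_cancel1: "z \<in> Rng a b \<Longrightarrow> foldl (stp a b) (foldl (stp a b) z w) (rev w) = z"
  using fab_rel[OF cancel1[of s w]] by simp
lemma fab_cancel2: "z \<in> Rng a b \<Longrightarrow> foldl (stp a b) (foldl (stp a b) z (rev w)) w = z"
  using fab_rel[OF cancel2[of s w]] by simp

definition rep :: "gen list set \<Rightarrow> gen list" where "rep Xc = (SOME w. Xc = wclass s w)"
definition act :: "gen list set \<Rightarrow> nat \<Rightarrow> nat" where
  "act Xc = (\<lambda>n\<in>EE. enc (foldl (stp a b) (dec n) (rev (rep Xc))))"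

lemma act_wclass: "act (wclass s w) = (\<lambda>n\<in>EE. enc (foldl (stp a b) (dec n) (rev w)))"
proof -
  have "wclass s w = wclass s (rep (wclass s w))" unfolding rep_def by (rule someI_ex) blast
  then have "wrel s (rev w) (rev (rep (wclass s w)))" by (simp add: wclass_eq wrel_rev)
  then have "\<And>n. n \<in> EE \<Longrightarrow> foldl (stp a b) (dec n) (rev (rep (wclass s w))) = foldl (stp a b) (dec n) (rev w)"
    using fab_rel dec_range by metis
  then show ?thesis unfolding act_def by (intro restrict_ext) simp
qed

lemma act_Bij: "act (wclass s w) \<in> Bij EE"
proof -
  let ?f = "act (wclass s w)"
  let ?g = "act (wclass s (rev w))"
  have g: "?g = (\<lambda>n\<in>EE. enc (foldl (stp a b) (dec n) w))" using act_wclass[of "rev w"] by simp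
  have f: "?f = (\<lambda>n\<in>EE. enc (foldl (stp a b) (dec n) (rev w)))" by (rule act_wclass)
  have "bij_betw ?f EE EE"
  proof (rule bij_betw_byWitness[where f'="?g"])
    show "\<forall>n\<in>EE. ?g (?f n) = n"
      using f g enc_E dec_enc fab_range dec_range fab_cancel2 enc_dec by simp
    show "\<forall>n\<in>EE. ?f (?g n) = n"
      using f g enc_E dec_enc fab_range dec_range fab_cancel1 enc_dec by simp
    show "?f ` EE \<subseteq> EE" using f by (auto intro!: enc_E fab_range dec_range)
    show "?g ` EE \<subseteq> EE" using g by (auto intro!: enc_E fab_range dec_range)
  qed
  moreover have "?f \<in> extensional EE" using f by simp
  ultimately show ?thesis by (simp add: Bij_def)
qed

lemma act_hom: "act \<in> hom (Gs0 s) (BijGroup EE)"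
proof (rule homI)
  fix Xc assume "Xc \<in> carrier (Gs0 s)"
  then show "act Xc \<in> carrier (BijGroup EE)" using act_Bij by (auto simp: carrier_Gs0 BijGroup_def)
next
  fix Xc Yc assume "Xc \<in> carrier (Gs0 s)" "Yc \<in> carrier (Gs0 s)"
  then obtain w w' where Xc: "Xc = wclass s w" and Yc: "Yc = wclass s w'" by (auto simp: carrier_Gs0)
  have "act (wclass s (w @ w')) = compose EE (act (wclass s w)) (act (wclass s w'))"
  proof (rule ext)
    fix n show "act (wclass s (w @ w')) n = compose EE (act (wclass s w)) (act (wclass s w')) n"
      using enc_E fab_range dec_range dec_enc by (cases "n \<in> EE") (simp_all add: act_wclass compose_def)
  qed
  then show "act (Xc \<otimes>\<^bsub>Gs0 s\<^esub> Yc) = act Xc \<otimes>\<^bsub>BijGroup EE\<^esub> act Yc"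
    using Xc Yc act_Bij by (simp add: mult_wclass BijGroup_def)
qed

lemma gaction: "group_action (Gs0 s) EE act"
  unfolding group_action_def group_hom_def group_hom_axioms_def
  using group_Gs0 group_BijGroup act_hom by blast

lemma cong_s:
  assumes "p mod int a = p2 mod int a" "p mod int b = p2 mod int b"
    "0 \<le> p" "p < int s" "0 \<le> p2" "p2 < int s"
  shows "p = p2"
proof -
  have "int a dvd p - p2" "int b dvd p - p2" using assms(1,2) by (simp_all add: mod_eq_dvd_iff)
  then have "lcm (int a) (int b) dvd p - p2" by (rule lcm_least)
  then have "int s dvd p - p2" using lcmab by simp
  then have "p mod int s = p2 mod int s" by (simp add: mod_eq_dvd_iff)
  then show ?thesis using assms(3-6) by simp
qed

lemma L01:
  assumes e: "ev s w = (p,q,k)"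
  shows "foldl (stp a b) (0,0,0) w = (p mod int a, q mod int b, k)"
    and "\<exists>k'. foldl (stp a b) (0,0,1) w = (q mod int a, p mod int b, k')"
proof -
  have r: "0 \<le> p" "p < int s" "0 \<le> q" "q < int s" "k < 6" using ev_range[OF spos, of w] e by (auto simp: Rng_def)
  have wr: "wrel s w (nf (p,q,k))" using nf_ev[OF spos, of w] e by simp
  have z0: "(0,0,0) \<in> Rng a b" and z1: "(0,0,1) \<in> Rng a b" using apos bpos by (simp_all add: Rng_def)
  have "foldl (stp a b) (0,0,0) w = foldl (stp a b) (0,0,0) (nf (p,q,k))" by (rule fab_rel[OF wr z0])
  also have "\<dots> = red a b (foldl stp0 (0,0,0) (nf (p,q,k)))" by (rule foldl_red2[OF z0])
  also have "\<dots> = (p mod int a, q mod int b, k)" using f0nf[OF r(1) r(3) r(5)] by simp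
  finally show "foldl (stp a b) (0,0,0) w = (p mod int a, q mod int b, k)" .
  obtain k' where k': "foldl stp0 (q,p,1) (sig k) = (q,p,k')" using sig_xy by blast
  have "foldl (stp a b) (0,0,1) w = foldl (stp a b) (0,0,1) (nf (p,q,k))" by (rule fab_rel[OF wr z1])
  also have "\<dots> = red a b (foldl stp0 (0,0,1) (nf (p,q,k)))" by (rule foldl_red2[OF z1])
  also have "\<dots> = red a b (foldl stp0 (foldl stp0 (0,0,1) (upow (nat p) @ vpow (nat q))) (sig k))"
    by (simp add: nf_def)
  also have "\<dots> = (q mod int a, p mod int b, k')" using f01[OF r(1) r(3)] k' by simp
  finally show "\<exists>k'. foldl (stp a b) (0,0,1) w = (q mod int a, p mod int b, k')" by blast
qed

lemma key_faithful:
  assumes h: "\<And>z. z \<in> Rng a b \<Longrightarrow> foldl (stp a b) z w1 = foldl (stp a b) z w2"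
  shows "ev s w1 = ev s w2"
proof -
  obtain p q k where e1: "ev s w1 = (p,q,k)" by (cases "ev s w1")
  obtain p2 q2 k2 where e2: "ev s w2 = (p2,q2,k2)" by (cases "ev s w2")
  have r1: "0 \<le> p" "p < int s" "0 \<le> q" "q < int s" using ev_range[OF spos, of w1] e1 by (auto simp: Rng_def)
  have r2: "0 \<le> p2" "p2 < int s" "0 \<le> q2" "q2 < int s" using ev_range[OF spos, of w2] e2 by (auto simp: Rng_def)
  have z0: "(0,0,0) \<in> Rng a b" and z1: "(0,0,1) \<in> Rng a b" using apos bpos by (simp_all add: Rng_def)
  have A: "p mod int a = p2 mod int a" "q mod int b = q2 mod int b" "k = k2"
    using h[OF z0] L01(1)[OF e1] L01(1)[OF e2] by auto
  obtain k' where k': "foldl (stp a b) (0,0,1) w1 = (q mod int a, p mod int b, k')" using L01(2)[OF e1] by blast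
  obtain k2' where k2': "foldl (stp a b) (0,0,1) w2 = (q2 mod int a, p2 mod int b, k2')" using L01(2)[OF e2] by blast
  have B: "q mod int a = q2 mod int a" "p mod int b = p2 mod int b" using h[OF z1] k' k2' by auto
  have "p = p2" using cong_s[OF A(1) B(2) r1(1,2) r2(1,2)] .
  moreover have "q = q2" using cong_s[OF B(1) A(2) r1(3,4) r2(3,4)] .
  ultimately show ?thesis using e1 e2 A(3) by simp
qed

lemma faithful: "faithful_action (Gs0 s) EE act"
  unfolding faithful_action_def faithful_action_axioms_def
proof (intro conjI gaction inj_onI)
  fix Xc Yc assume "Xc \<in> carrier (Gs0 s)" "Yc \<in> carrier (Gs0 s)" and e: "act Xc = act Yc"
  then obtain w w' where Xc: "Xc = wclass s w" and Yc: "Yc = wclass s w'" by (auto simp: carrier_Gs0)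
  have "\<And>z. z \<in> Rng a b \<Longrightarrow> foldl (stp a b) z (rev w) = foldl (stp a b) z (rev w')"
  proof -
    fix z assume z: "z \<in> Rng a b"
    have "act Xc (enc z) = act Yc (enc z)" using e by simp
    then have "enc (foldl (stp a b) z (rev w)) = enc (foldl (stp a b) z (rev w'))"
      using Xc Yc enc_E[OF z] dec_enc[OF z] by (simp add: act_wclass)
    then have "dec (enc (foldl (stp a b) z (rev w))) = dec (enc (foldl (stp a b) z (rev w')))" by simp
    then show "foldl (stp a b) z (rev w) = foldl (stp a b) z (rev w')"
      using dec_enc fab_range[OF z] by simp
  qed
  then have "ev s (rev w) = ev s (rev w')" by (rule key_faithful)
  then have "wrel s (rev w) (rev w')" using wrel_iff[OF spos] by simp
  then have "wrel s w w'" using wrel_rev by fastforce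
  then show "Xc = Yc" using Xc Yc by (simp add: wclass_eq)
qed

lemma fab_nf: "z \<in> Rng a b \<Longrightarrow> foldl (stp a b) (0,0,0) (nf z) = z"
proof -
  assume z: "z \<in> Rng a b"
  obtain x y k where st: "z = (x,y,k)" by (cases z)
  have r: "0 \<le> x" "0 \<le> y" "k < 6" using z st by (auto simp: Rng_def)
  have z0: "(0,0,0) \<in> Rng a b" using apos bpos by (simp add: Rng_def)
  show ?thesis using foldl_red2[OF z0, of "nf z"] f0nf[OF r] red_id[OF z] st by simp
qed

lemma transitive: "transitive_action (Gs0 s) EE act"
  unfolding transitive_action_def transitive_action_axioms_def
proof (intro conjI gaction allI impI)
  fix n n' assume n: "n \<in> EE" and n': "n' \<in> EE"
  define z where "z = dec n"
  define z' where "z' = dec n'"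
  have z: "z \<in> Rng a b" and z': "z' \<in> Rng a b" using dec_range n n' by (simp_all add: z_def z'_def)
  define W where "W = rev (nf z) @ nf z'"
  have "foldl (stp a b) z (rev (nf z)) = foldl (stp a b) (foldl (stp a b) (0,0,0) (nf z)) (rev (nf z))"
    using fab_nf[OF z] by simp
  also have "\<dots> = (0,0,0)" using fab_cancel1 apos bpos by (simp add: Rng_def)
  finally have 1: "foldl (stp a b) z (rev (nf z)) = (0,0,0)" .
  have "foldl (stp a b) z W = z'" using 1 fab_nf[OF z'] by (simp add: W_def)
  then have "act (wclass s (rev W)) n = n'" using n enc_dec[OF n'] by (simp add: act_wclass z_def z'_def)
  moreover have "wclass s (rev W) \<in> carrier (Gs0 s)" by (simp add: carrier_Gs0)
  ultimately show "\<exists>g\<in>carrier (Gs0 s). act g n = n'" by blast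
qed

end

theorem mainTheorem8:
  fixes s a b :: nat
  assumes "s \<ge> 2" and "a > 0" and "b > 0" and "lcm a b = s"
  defines "H \<equiv> generate (Gs0 s) {u_el s [^]\<^bsub>Gs0 s\<^esub> a, v_el s [^]\<^bsub>Gs0 s\<^esub> b}"
  shows "core_free (Gs0 s) H \<and> card (rcosets\<^bsub>Gs0 s\<^esub> H) = 6 * a * b
         \<and> (\<exists>(E :: nat set) \<phi>. faithful_action (Gs0 s) E \<phi> \<and> transitive_action (Gs0 s) E \<phi>
               \<and> finite E \<and> card E = 6 * a * b)"
proof -
  interpret hsetup s a b using assms(1-4) by unfold_locales
  have "\<exists>(E :: nat set) \<phi>. faithful_action (Gs0 s) E \<phi> \<and> transitive_action (Gs0 s) E \<phi>
               \<and> finite E \<and> card E = 6 * a * b"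
    using faithful transitive fin_E card_E by blast
  then show ?thesis unfolding H_def using core_free_H card_rc by blast
qed

end
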